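(* Let $\mathcal C$ be a category with a factorisation system $(\mathcal E,\mathcal M)$ where $\mathcal M$ consists of monomorphisms. Suppose we are given a commuting square $C\to A$, $C\to B$, $a:A\to D$, $b:B\to D$ with $a,b\in\mathcal M$, and suppose that the span $A\leftarrow C\to B$ has a multipushout. Let $P$ be the (unique) instance of this multipushout admitting a morphism $u:P\to D$ of cocones into $A\xrightarrow{a}D\xleftarrow{b}B$, and let $P\to Q\to D$ be the $(\mathcal E,\mathcal M)$-factorisation of $u$. Then $Q\to D$, together with the induced morphisms $A\to P\to Q$ and $B\to P\to Q$ (which lie in $\mathcal M$), is the join $A\vee B$ of the subobjects $a$ and $b$ of $D$ in $\mathcal C_{\mathcal M}$.
   Context: A factorisation system $(\mathcal E,\mathcal M)$ is an orthogonal factorisation system; $\mathcal C_{\mathcal M}$ is the subcategory of $\mathcal C$ with all objects and with morphisms those in $\mathcal M$; subobjects of $D$ in $\mathcal C_{\mathcal M}$ are (isomorphism classes of) morphisms in $\mathcal M$ with codomain $D$, ordered by factorisation through morphisms of $\mathcal M$, and the join is the least upper bound. A multipushout of a span $A\xleftarrow{f}C\xrightarrow{g}B$ is a set $\{A\xrightarrow{h_i}P_i\xleftarrow{k_i}B\}_{i\in I}$ of cocones over the span such that for every cocone $A\xrightarrow{x}D\xleftarrow{y}B$ there are a unique $i\in I$ and a unique $u:P_i\to D$ with $uh_i=x$ and $uk_i=y$; each $P_i$ (with $h_i,k_i$) is an instance of the multipushout. *)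

theory Defs
  imports Main
begin

text \<open>A (small or large) category presented by its objects, arrows, domain, codomain,
  composition (Comp g f = g after f, defined when Cod f = Dom g) and identities.\<close>

record ('o, 'a) cat =
  Obj  :: "'o set"
  Arr  :: "'a set"
  Dom  :: "'a \<Rightarrow> 'o"
  Cod  :: "'a \<Rightarrow> 'o"
  Comp :: "'a \<Rightarrow> 'a \<Rightarrow> 'a"
  Id   :: "'o \<Rightarrow> 'a"

definition hom :: "('o, 'a) cat \<Rightarrow> 'o \<Rightarrow> 'o \<Rightarrow> 'a set" where
  "hom C X Y = {f \<in> Arr C. Dom C f = X \<and> Cod C f = Y}"

definition category :: "('o, 'a) cat \<Rightarrow> bool" where
  "category C \<longleftrightarrow>
     (\<forall>f \<in> Arr C. Dom C f \<in> Obj C \<and> Cod C f \<in> Obj C) \<and>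
     (\<forall>X \<in> Obj C. Id C X \<in> hom C X X) \<and>
     (\<forall>f \<in> Arr C. \<forall>g \<in> Arr C. Cod C f = Dom C g \<longrightarrow> Comp C g f \<in> hom C (Dom C f) (Cod C g)) \<and>
     (\<forall>f \<in> Arr C. Comp C (Id C (Cod C f)) f = f \<and> Comp C f (Id C (Dom C f)) = f) \<and>
     (\<forall>f \<in> Arr C. \<forall>g \<in> Arr C. \<forall>h \<in> Arr C. Cod C f = Dom C g \<longrightarrow> Cod C g = Dom C h \<longrightarrow>
        Comp C h (Comp C g f) = Comp C (Comp C h g) f)"

definition iso :: "('o, 'a) cat \<Rightarrow> 'a \<Rightarrow> bool" where
  "iso C f \<longleftrightarrow> f \<in> Arr C \<and>
     (\<exists>g \<in> hom C (Cod C f) (Dom C f). Comp C g f = Id C (Dom C f) \<and> Comp C f g = Id C (Cod C f))"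

definition mono :: "('o, 'a) cat \<Rightarrow> 'a \<Rightarrow> bool" where
  "mono C m \<longleftrightarrow> m \<in> Arr C \<and>
     (\<forall>f \<in> Arr C. \<forall>g \<in> Arr C. Cod C f = Dom C m \<longrightarrow> Cod C g = Dom C m \<longrightarrow> Dom C f = Dom C g \<longrightarrow>
        Comp C m f = Comp C m g \<longrightarrow> f = g)"

definition factorisation_system :: "('o, 'a) cat \<Rightarrow> 'a set \<Rightarrow> 'a set \<Rightarrow> bool" where
  "factorisation_system C E M \<longleftrightarrow>
     E \<subseteq> Arr C \<and> M \<subseteq> Arr C \<and>
     (\<forall>f. iso C f \<longrightarrow> f \<in> E \<and> f \<in> M) \<and>
     (\<forall>f \<in> E. \<forall>g \<in> E. Cod C f = Dom C g \<longrightarrow> Comp C g f \<in> E) \<and>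
     (\<forall>f \<in> M. \<forall>g \<in> M. Cod C f = Dom C g \<longrightarrow> Comp C g f \<in> M) \<and>
     (\<forall>f \<in> Arr C. \<exists>e \<in> E. \<exists>m \<in> M. Cod C e = Dom C m \<and> Comp C m e = f) \<and>
     (\<forall>e \<in> E. \<forall>m \<in> M. \<forall>u \<in> hom C (Dom C e) (Dom C m). \<forall>v \<in> hom C (Cod C e) (Cod C m).
        Comp C v e = Comp C m u \<longrightarrow>
        (\<exists>!d. d \<in> hom C (Cod C e) (Dom C m) \<and> Comp C d e = u \<and> Comp C m d = v))"

definition cocone :: "('o, 'a) cat \<Rightarrow> 'a \<Rightarrow> 'a \<Rightarrow> 'a \<Rightarrow> 'a \<Rightarrow> bool" where
  "cocone C f g x y \<longleftrightarrow> x \<in> Arr C \<and> y \<in> Arr C \<and>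
     Dom C x = Cod C f \<and> Dom C y = Cod C g \<and> Cod C x = Cod C y \<and> Comp C x f = Comp C y g"

definition multipushout :: "('o, 'a) cat \<Rightarrow> 'a \<Rightarrow> 'a \<Rightarrow> ('a \<times> 'a) set \<Rightarrow> bool" where
  "multipushout C f g S \<longleftrightarrow>
     (\<forall>(h, k) \<in> S. cocone C f g h k) \<and>
     (\<forall>x y. cocone C f g x y \<longrightarrow>
        (\<exists>!(p, u). p \<in> S \<and> u \<in> hom C (Cod C (fst p)) (Cod C x) \<and>
                   Comp C u (fst p) = x \<and> Comp C u (snd p) = y))"

definition sub_le :: "('o, 'a) cat \<Rightarrow> 'a set \<Rightarrow> 'a \<Rightarrow> 'a \<Rightarrow> bool" where
  "sub_le C M m n \<longleftrightarrow> (\<exists>t \<in> M. Cod C t = Dom C n \<and> Dom C t = Dom C m \<and> Comp C n t = m)"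

definition is_subobject :: "('o, 'a) cat \<Rightarrow> 'a set \<Rightarrow> 'o \<Rightarrow> 'a \<Rightarrow> bool" where
  "is_subobject C M D m \<longleftrightarrow> m \<in> M \<and> Cod C m = D"

definition is_join :: "('o, 'a) cat \<Rightarrow> 'a set \<Rightarrow> 'o \<Rightarrow> 'a \<Rightarrow> 'a \<Rightarrow> 'a \<Rightarrow> bool" where
  "is_join C M D a b j \<longleftrightarrow> is_subobject C M D j \<and> sub_le C M a j \<and> sub_le C M b j \<and>
     (\<forall>n. is_subobject C M D n \<longrightarrow> sub_le C M a n \<longrightarrow> sub_le C M b n \<longrightarrow> sub_le C M j n)"

end

theory Submission
  imports Defs
begin

lemma cat_comp:
  assumes "category C" "f \<in> Arr C" "g \<in> Arr C" "Cod C f = Dom C g"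
  shows "Comp C g f \<in> Arr C \<and> Dom C (Comp C g f) = Dom C f \<and> Cod C (Comp C g f) = Cod C g"
  using assms unfolding category_def hom_def by blast

lemma cat_assoc:
  assumes "category C" "f \<in> Arr C" "g \<in> Arr C" "h \<in> Arr C" "Cod C f = Dom C g" "Cod C g = Dom C h"
  shows "Comp C h (Comp C g f) = Comp C (Comp C h g) f"
  using assms unfolding category_def by blast

lemma cat_id:
  assumes "category C" "X \<in> Obj C"
  shows "Id C X \<in> Arr C \<and> Dom C (Id C X) = X \<and> Cod C (Id C X) = X"
  using assms unfolding category_def hom_def by blast

lemma cat_idl: "category C \<Longrightarrow> f \<in> Arr C \<Longrightarrow> Comp C (Id C (Cod C f)) f = f"
  unfolding category_def by blast
lemma cat_idr: "category C \<Longrightarrow> f \<in> Arr C \<Longrightarrow> Comp C f (Id C (Dom C f)) = f"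
  unfolding category_def by blast
lemma cat_obj: "category C \<Longrightarrow> f \<in> Arr C \<Longrightarrow> Dom C f \<in> Obj C \<and> Cod C f \<in> Obj C"
  unfolding category_def by blast

lemma mono_cancel:
  assumes "mono C m" "x \<in> Arr C" "y \<in> Arr C" "Cod C x = Dom C m" "Cod C y = Dom C m"
    "Dom C x = Dom C y" "Comp C m x = Comp C m y"
  shows "x = y"
  using assms unfolding mono_def by blast

lemma left_cancel:
  assumes cat: "category C" and fs: "factorisation_system C E M"
    and Mm: "\<forall>m \<in> M. mono C m"
    and x: "x \<in> Arr C" and m: "m \<in> M" and cx: "Cod C x = Dom C m" and y: "Comp C m x \<in> M"
  shows "x \<in> M"
proof -
  have EA: "E \<subseteq> Arr C" and MA: "M \<subseteq> Arr C" using fs unfolding factorisation_system_def by auto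
  have isoM: "\<And>f. iso C f \<Longrightarrow> f \<in> M" using fs unfolding factorisation_system_def by auto
  have compM: "\<And>f g. f \<in> M \<Longrightarrow> g \<in> M \<Longrightarrow> Cod C f = Dom C g \<Longrightarrow> Comp C g f \<in> M"
    using fs unfolding factorisation_system_def by auto
  obtain e' m' where e': "e' \<in> E" and m': "m' \<in> M" and em: "Cod C e' = Dom C m'" and xf: "Comp C m' e' = x"
    using fs x unfolding factorisation_system_def by blast
  have orth: "\<forall>u \<in> hom C (Dom C e') (Dom C (Comp C m x)). \<forall>v \<in> hom C (Cod C e') (Cod C (Comp C m x)).
        Comp C v e' = Comp C (Comp C m x) u \<longrightarrow>
        (\<exists>!d. d \<in> hom C (Cod C e') (Dom C (Comp C m x)) \<and> Comp C d e' = u \<and> Comp C (Comp C m x) d = v)"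
    using fs e' y unfolding factorisation_system_def by blast
  have e'A: "e' \<in> Arr C" using e' EA by auto
  have m'A: "m' \<in> Arr C" using m' MA by auto
  have mA: "m \<in> Arr C" using m MA by auto
  have c1: "Dom C x = Dom C e' \<and> Cod C x = Cod C m'" using cat_comp[OF cat e'A m'A em] xf by auto
  have yd: "Dom C (Comp C m x) = Dom C e'" and yc: "Cod C (Comp C m x) = Cod C m"
    using cat_comp[OF cat x mA cx] c1 by auto
  have yA: "Comp C m x \<in> Arr C" using y MA by auto
  define i where "i = Id C (Dom C e')"
  have iA: "i \<in> Arr C \<and> Dom C i = Dom C e' \<and> Cod C i = Dom C e'"
    unfolding i_def using cat_id[OF cat] cat_obj[OF cat e'A] by blast
  have mm': "Comp C m m' \<in> Arr C \<and> Dom C (Comp C m m') = Dom C m' \<and> Cod C (Comp C m m') = Cod C m"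
    using cat_comp[OF cat m'A mA] c1 cx by auto
  have sq: "Comp C (Comp C m m') e' = Comp C (Comp C m x) i"
  proof -
    have "Comp C (Comp C m m') e' = Comp C m x"
      using cat_assoc[OF cat e'A m'A mA em] c1 cx xf by auto
    moreover have "Comp C (Comp C m x) i = Comp C m x"
      unfolding i_def using cat_idr[OF cat yA] yd by simp
    ultimately show ?thesis by simp
  qed
  obtain d where d: "d \<in> hom C (Cod C e') (Dom C (Comp C m x))" and de: "Comp C d e' = i"
      and yd2: "Comp C (Comp C m x) d = Comp C m m'"
  proof -
    have hi: "i \<in> hom C (Dom C e') (Dom C (Comp C m x))" using iA yd unfolding hom_def by auto
    have hv: "Comp C m m' \<in> hom C (Cod C e') (Cod C (Comp C m x))" using mm' em yc unfolding hom_def by auto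
    have "\<exists>!d. d \<in> hom C (Cod C e') (Dom C (Comp C m x)) \<and> Comp C d e' = i \<and> Comp C (Comp C m x) d = Comp C m m'"
      using orth hi hv sq by blast
    thus ?thesis using that by blast
  qed
  have dA: "d \<in> Arr C" and dD: "Dom C d = Cod C e'" and dC: "Cod C d = Dom C e'"
    using d yd unfolding hom_def by auto
  have ed: "Comp C e' d \<in> Arr C \<and> Dom C (Comp C e' d) = Cod C e' \<and> Cod C (Comp C e' d) = Cod C e'"
    using cat_comp[OF cat dA e'A] dD dC by auto
  define j where "j = Id C (Cod C e')"
  have jA: "j \<in> Arr C \<and> Dom C j = Cod C e' \<and> Cod C j = Cod C e'"
    unfolding j_def using cat_id[OF cat] cat_obj[OF cat e'A] by blast
  have "Comp C m' (Comp C e' d) = Comp C m' j"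
  proof (rule mono_cancel[of C m])
    show "mono C m" using Mm m by auto
    show "Comp C m' (Comp C e' d) \<in> Arr C" "Comp C m' j \<in> Arr C"
      using cat_comp[OF cat _ m'A] ed jA em by auto
    show "Cod C (Comp C m' (Comp C e' d)) = Dom C m" "Cod C (Comp C m' j) = Dom C m"
      using cat_comp[OF cat _ m'A] ed jA em c1 cx by auto
    show "Dom C (Comp C m' (Comp C e' d)) = Dom C (Comp C m' j)"
      using cat_comp[OF cat _ m'A] ed jA em by auto
    have "Comp C m (Comp C m' (Comp C e' d)) = Comp C (Comp C m (Comp C m' e')) d"
    proof -
      have "Comp C m' (Comp C e' d) = Comp C x d"
        using cat_assoc[OF cat dA e'A m'A] dD dC em xf by simp
      moreover have "Comp C m (Comp C x d) = Comp C (Comp C m x) d"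
        using cat_assoc[OF cat dA x mA] dC c1 cx by simp
      ultimately show ?thesis using xf by simp
    qed
    also have "\<dots> = Comp C m m'" using xf yd2 by simp
    also have "\<dots> = Comp C m (Comp C m' j)"
      unfolding j_def using cat_idr[OF cat m'A] em by simp
    finally show "Comp C m (Comp C m' (Comp C e' d)) = Comp C m (Comp C m' j)" .
  qed
  hence "Comp C e' d = j"
    using mono_cancel[of C m' "Comp C e' d" j] Mm m' ed jA em by auto
  hence "iso C e'"
    unfolding iso_def using e'A d yd de i_def j_def by auto
  hence "e' \<in> M" by (rule isoM)
  thus ?thesis using compM m' em xf by auto
qed


theorem lemma8p4:
  fixes \<C> :: "('o, 'a) cat" and E M :: "'a set" and S :: "('a \<times> 'a) set"
    and f g a b h k u e q :: 'a and A B C0 D :: 'o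
  assumes cat: "category \<C>"
    and fs: "factorisation_system \<C> E M"
    and M_mono: "\<forall>m \<in> M. mono \<C> m"
    and f: "f \<in> hom \<C> C0 A" and g: "g \<in> hom \<C> C0 B"
    and a: "a \<in> hom \<C> A D" and b: "b \<in> hom \<C> B D"
    and aM: "a \<in> M" and bM: "b \<in> M"
    and comm: "Comp \<C> a f = Comp \<C> b g"
    and mp: "multipushout \<C> f g S"
    and inst: "(h, k) \<in> S"
    and u: "u \<in> hom \<C> (Cod \<C> h) D" and uh: "Comp \<C> u h = a" and uk: "Comp \<C> u k = b"
    and eE: "e \<in> E" and qM: "q \<in> M"
    and eq: "Cod \<C> e = Dom \<C> q" and fact: "Comp \<C> q e = u"
  shows "Comp \<C> e h \<in> M \<and> Comp \<C> e k \<in> M \<and>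
         Comp \<C> q (Comp \<C> e h) = a \<and> Comp \<C> q (Comp \<C> e k) = b \<and>
         is_join \<C> M D a b q"
proof -
  have EA: "E \<subseteq> Arr \<C>" and MA: "M \<subseteq> Arr \<C>" using fs unfolding factorisation_system_def by auto
  have eA: "e \<in> Arr \<C>" using eE EA by auto
  have qA: "q \<in> Arr \<C>" using qM MA by auto
  have aA: "a \<in> Arr \<C>" and aD: "Dom \<C> a = A" and aC: "Cod \<C> a = D" using a unfolding hom_def by auto
  have bA: "b \<in> Arr \<C>" and bD: "Dom \<C> b = B" and bC: "Cod \<C> b = D" using b unfolding hom_def by auto
  have fA: "f \<in> Arr \<C>" and fD: "Dom \<C> f = C0" and fC: "Cod \<C> f = A" using f unfolding hom_def by auto
  have gA: "g \<in> Arr \<C>" and gD: "Dom \<C> g = C0" and gC: "Cod \<C> g = B" using g unfolding hom_def by auto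
  have uA: "u \<in> Arr \<C>" and uD: "Dom \<C> u = Cod \<C> h" and uC: "Cod \<C> u = D" using u unfolding hom_def by auto
  have qe: "Dom \<C> u = Dom \<C> e \<and> Cod \<C> u = Cod \<C> q" using cat_comp[OF cat eA qA eq] fact by auto
  have coc: "\<forall>(h, k) \<in> S. cocone \<C> f g h k" using mp unfolding multipushout_def by auto
  have hk: "cocone \<C> f g h k" using coc inst by auto
  have hA: "h \<in> Arr \<C>" and kA: "k \<in> Arr \<C>" and hD: "Dom \<C> h = A" and kD: "Dom \<C> k = B"
    and hkC: "Cod \<C> h = Cod \<C> k"
    using hk fC gC unfolding cocone_def by auto
  have he: "Cod \<C> h = Dom \<C> e" and ke: "Cod \<C> k = Dom \<C> e" using qe uD hkC by auto
  have ehA: "Comp \<C> e h \<in> Arr \<C> \<and> Dom \<C> (Comp \<C> e h) = A \<and> Cod \<C> (Comp \<C> e h) = Dom \<C> q"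
    using cat_comp[OF cat hA eA he] hD eq by auto
  have ekA: "Comp \<C> e k \<in> Arr \<C> \<and> Dom \<C> (Comp \<C> e k) = B \<and> Cod \<C> (Comp \<C> e k) = Dom \<C> q"
    using cat_comp[OF cat kA eA ke] kD eq by auto
  have qeh: "Comp \<C> q (Comp \<C> e h) = a"
    using cat_assoc[OF cat hA eA qA he eq] fact uh by simp
  have qek: "Comp \<C> q (Comp \<C> e k) = b"
    using cat_assoc[OF cat kA eA qA ke eq] fact uk by simp
  have ehM: "Comp \<C> e h \<in> M"
    using left_cancel[OF cat fs M_mono _ qM] ehA qeh aM by auto
  have ekM: "Comp \<C> e k \<in> M"
    using left_cancel[OF cat fs M_mono _ qM] ekA qek bM by auto
  have qC: "Cod \<C> q = D" using qe uC by auto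
  have join: "is_join \<C> M D a b q"
    unfolding is_join_def
  proof (intro conjI allI impI)
    show "is_subobject \<C> M D q" unfolding is_subobject_def using qM qC by auto
    show "sub_le \<C> M a q" unfolding sub_le_def using ehM ehA qeh aD by auto
    show "sub_le \<C> M b q" unfolding sub_le_def using ekM ekA qek bD by auto
    fix n assume nsub: "is_subobject \<C> M D n" and an: "sub_le \<C> M a n" and bn: "sub_le \<C> M b n"
    have nM: "n \<in> M" and nC: "Cod \<C> n = D" using nsub unfolding is_subobject_def by auto
    have nA: "n \<in> Arr \<C>" using nM MA by auto
    have nmono: "mono \<C> n" using M_mono nM by auto
    obtain s where sM: "s \<in> M" and sC: "Cod \<C> s = Dom \<C> n" and sD: "Dom \<C> s = A" and ns: "Comp \<C> n s = a"
      using an aD unfolding sub_le_def by auto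
    obtain t where tM: "t \<in> M" and tC: "Cod \<C> t = Dom \<C> n" and tD: "Dom \<C> t = B" and nt: "Comp \<C> n t = b"
      using bn bD unfolding sub_le_def by auto
    have sA: "s \<in> Arr \<C>" and tA: "t \<in> Arr \<C>" using sM tM MA by auto
    have sf: "Comp \<C> s f \<in> Arr \<C> \<and> Dom \<C> (Comp \<C> s f) = C0 \<and> Cod \<C> (Comp \<C> s f) = Dom \<C> n"
      using cat_comp[OF cat fA sA] fC sD fD sC by auto
    have tg: "Comp \<C> t g \<in> Arr \<C> \<and> Dom \<C> (Comp \<C> t g) = C0 \<and> Cod \<C> (Comp \<C> t g) = Dom \<C> n"
      using cat_comp[OF cat gA tA] gC tD gD tC by auto
    have "Comp \<C> n (Comp \<C> s f) = Comp \<C> n (Comp \<C> t g)"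
      using cat_assoc[OF cat fA sA nA] cat_assoc[OF cat gA tA nA] fC sD sC gC tD tC ns nt comm by simp
    hence sftg: "Comp \<C> s f = Comp \<C> t g"
      using mono_cancel[OF nmono] sf tg by auto
    have cst: "cocone \<C> f g s t" unfolding cocone_def using sA tA sD tD fC gC sC tC sftg by auto
    have cab: "cocone \<C> f g a b" unfolding cocone_def using aA bA aD bD fC gC aC bC comm by auto
    have U: "\<And>x y. cocone \<C> f g x y \<Longrightarrow> (\<exists>!(p, w). p \<in> S \<and> w \<in> hom \<C> (Cod \<C> (fst p)) (Cod \<C> x) \<and>
                   Comp \<C> w (fst p) = x \<and> Comp \<C> w (snd p) = y)"
      using mp unfolding multipushout_def by blast
    obtain p w where pS: "p \<in> S" and w: "w \<in> hom \<C> (Cod \<C> (fst p)) (Cod \<C> s)"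
      and ws: "Comp \<C> w (fst p) = s" and wt: "Comp \<C> w (snd p) = t"
      using U[OF cst] by auto
    have wA: "w \<in> Arr \<C>" and wD: "Dom \<C> w = Cod \<C> (fst p)" and wC: "Cod \<C> w = Dom \<C> n"
      using w sC unfolding hom_def by auto
    have pc: "cocone \<C> f g (fst p) (snd p)" using coc pS by (cases p) auto
    have p1A: "fst p \<in> Arr \<C>" and p2A: "snd p \<in> Arr \<C>" and p12: "Cod \<C> (fst p) = Cod \<C> (snd p)"
      using pc unfolding cocone_def by auto
    have nw: "Comp \<C> n w \<in> Arr \<C> \<and> Dom \<C> (Comp \<C> n w) = Cod \<C> (fst p) \<and> Cod \<C> (Comp \<C> n w) = D"
      using cat_comp[OF cat wA nA wC] wD nC by auto
    have nw1: "Comp \<C> (Comp \<C> n w) (fst p) = a"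
      using cat_assoc[OF cat p1A wA nA] wD wC ws ns by simp
    have nw2: "Comp \<C> (Comp \<C> n w) (snd p) = b"
      using cat_assoc[OF cat p2A wA nA] wD wC wt nt p12 by simp
    have w1: "(p, Comp \<C> n w) = ((h, k), u)"
    proof -
      have ex: "\<exists>!(p, w). p \<in> S \<and> w \<in> hom \<C> (Cod \<C> (fst p)) (Cod \<C> a) \<and>
                   Comp \<C> w (fst p) = a \<and> Comp \<C> w (snd p) = b" by (rule U[OF cab])
      have P1: "p \<in> S \<and> Comp \<C> n w \<in> hom \<C> (Cod \<C> (fst p)) (Cod \<C> a) \<and>
                   Comp \<C> (Comp \<C> n w) (fst p) = a \<and> Comp \<C> (Comp \<C> n w) (snd p) = b"
        using pS nw nw1 nw2 aC unfolding hom_def by auto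
      have P2: "(h, k) \<in> S \<and> u \<in> hom \<C> (Cod \<C> (fst (h, k))) (Cod \<C> a) \<and>
                   Comp \<C> u (fst (h, k)) = a \<and> Comp \<C> u (snd (h, k)) = b"
        using inst u uh uk aC by auto
      define Q where "Q = (\<lambda>(p, w). p \<in> S \<and> w \<in> hom \<C> (Cod \<C> (fst p)) (Cod \<C> a) \<and>
                   Comp \<C> w (fst p) = a \<and> Comp \<C> w (snd p) = b)"
      have e1: "\<exists>!x. Q x" using ex unfolding Q_def .
      have q1: "Q (p, Comp \<C> n w)" using P1 unfolding Q_def by simp
      have q2: "Q ((h, k), u)" using P2 unfolding Q_def by simp
      show ?thesis using e1 q1 q2 by blast
    qed
    hence ph: "p = (h, k)" and nwu: "Comp \<C> n w = u" by auto
    have wD': "Dom \<C> w = Dom \<C> e" using wD ph he by simp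
    have orth: "\<forall>u \<in> hom \<C> (Dom \<C> e) (Dom \<C> n). \<forall>v \<in> hom \<C> (Cod \<C> e) (Cod \<C> n).
        Comp \<C> v e = Comp \<C> n u \<longrightarrow>
        (\<exists>!d. d \<in> hom \<C> (Cod \<C> e) (Dom \<C> n) \<and> Comp \<C> d e = u \<and> Comp \<C> n d = v)"
      using fs eE nM unfolding factorisation_system_def by blast
    have "w \<in> hom \<C> (Dom \<C> e) (Dom \<C> n)" using wA wD' wC unfolding hom_def by auto
    moreover have "q \<in> hom \<C> (Cod \<C> e) (Cod \<C> n)" using qA eq qC nC unfolding hom_def by auto
    moreover have "Comp \<C> q e = Comp \<C> n w" using fact nwu by simp
    ultimately obtain d where d: "d \<in> hom \<C> (Cod \<C> e) (Dom \<C> n)" and nd: "Comp \<C> n d = q"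
      using orth by blast
    have dA: "d \<in> Arr \<C>" and dD: "Dom \<C> d = Dom \<C> q" and dC: "Cod \<C> d = Dom \<C> n"
      using d eq unfolding hom_def by auto
    have dM: "d \<in> M" using left_cancel[OF cat fs M_mono dA nM dC] nd qM by simp
    show "sub_le \<C> M q n" unfolding sub_le_def using dM dC dD nd by auto
  qed
  show ?thesis using ehM ekM qeh qek join by auto
qed

end
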